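(* Let $\Lambda$ be a row-finite $k$-graph with no sources and $R$ a commutative ring with $1$. Let $\mu,\nu\in\Lambda$ with $s(\mu)=s(\nu)$ and $r\in R\setminus\{0\}$ such that $r\,s_\mu s_{\nu^*}\in\mathcal{D}'$. Then $s_\mu s_{\mu^*}=s_\nu s_{\nu^*}$.
   Context: A $k$-graph is a countable category $\Lambda$ (vertices $\Lambda^0$, paths, maps $r,s$) with a degree functor $d:\Lambda\to\mathbb{N}^k$ satisfying unique factorization: if $d(\lambda)=m+n$ there are unique $\mu,\nu$ with $s(\mu)=r(\nu)$, $d(\mu)=m,d(\nu)=n$, $\lambda=\mu\nu$. $v\Lambda^n$ denotes paths of degree $n$ with range $v$; row-finite with no sources means each $v\Lambda^n$ is finite and nonempty. ${\rm KP}_R(\Lambda)$ is the universal $R$-algebra generated by $p_v$ ($v\in\Lambda^0$), $s_\lambda,s_{\lambda^*}$ ($d(\lambda)\ne0$) with relations (KP1) $p_v$ mutually orthogonal idempotents; (KP2) $s_\lambda s_\mu=s_{\lambda\mu}$, $s_{\mu^*}s_{\lambda^*}=s_{(\lambda\mu)^*}$, $p_{r(\lambda)}s_\lambda=s_\lambda=s_\lambda p_{s(\lambda)}$, $p_{s(\lambda)}s_{\lambda^*}=s_{\lambda^*}=s_{\lambda^*}p_{r(\lambda)}$ when $r(\mu)=s(\lambda)$; (KP3) $s_{\lambda^*}s_\mu=\delta_{\lambda,\mu}p_{s(\lambda)}$ when $d(\lambda)=d(\mu)$; (KP4) $p_v=\sum_{\lambda\in v\Lambda^n}s_\lambda s_{\lambda^*}$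 for $n\ne0$. Convention $s_v=s_{v^*}=p_v$. $\mathcal{D}$ is the $R$-subalgebra generated by $\{s_\mu s_{\mu^*}:\mu\in\Lambda\}$, and $\mathcal{D}'=\{a\in{\rm KP}_R(\Lambda): ad=da\ \forall d\in\mathcal{D}\}$. *)

theory Defs
  imports "HOL-Library.Countable_Set"
begin

text \<open>A k-graph is modelled as a small category whose morphisms (paths) form a
set of elements of some type 'p; the objects (vertices) are identified with the
identity morphisms.  rng and src give the range and source vertex,
cmp is composition (cmp lam mu is defined when src lam = rng mu),
and deg is the degree functor into N^k, an element of N^k being represented as a
function nat => nat vanishing at all i >= k.\<close>

record 'p kgraph =
  paths :: "'p set"
  rng   :: "'p \<Rightarrow> 'p"
  src   :: "'p \<Rightarrow> 'p"
  cmp   :: "'p \<Rightarrow> 'p \<Rightarrow> 'p"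
  deg   :: "'p \<Rightarrow> nat \<Rightarrow> nat"

definition vertices :: "'p kgraph \<Rightarrow> 'p set" where
  "vertices G = {v \<in> paths G. rng G v = v}"

definition in_Nk :: "nat \<Rightarrow> (nat \<Rightarrow> nat) \<Rightarrow> bool" where
  "in_Nk k m \<longleftrightarrow> (\<forall>i\<ge>k. m i = 0)"

definition is_kgraph :: "nat \<Rightarrow> 'p kgraph \<Rightarrow> bool" where
  "is_kgraph k G \<longleftrightarrow>
     countable (paths G) \<and>
     \<comment> \<open>category structure\<close>
     (\<forall>l\<in>paths G. rng G l \<in> paths G \<and> src G l \<in> paths G) \<and>
     (\<forall>l\<in>paths G. rng G (rng G l) = rng G l \<and> src G (rng G l) = rng G l \<and>
                   rng G (src G l) = src G l \<and> src G (src G l) = src G l) \<and>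
     (\<forall>l\<in>paths G. cmp G (rng G l) l = l \<and> cmp G l (src G l) = l) \<and>
     (\<forall>l\<in>paths G. \<forall>m\<in>paths G. src G l = rng G m \<longrightarrow>
         cmp G l m \<in> paths G \<and> rng G (cmp G l m) = rng G l \<and> src G (cmp G l m) = src G m) \<and>
     (\<forall>l\<in>paths G. \<forall>m\<in>paths G. \<forall>n\<in>paths G. src G l = rng G m \<longrightarrow> src G m = rng G n \<longrightarrow>
         cmp G (cmp G l m) n = cmp G l (cmp G m n)) \<and>
     \<comment> \<open>degree functor into N^k\<close>
     (\<forall>l\<in>paths G. in_Nk k (deg G l)) \<and>
     (\<forall>l\<in>paths G. \<forall>m\<in>paths G. src G l = rng G m \<longrightarrow>
         deg G (cmp G l m) = (\<lambda>i. deg G l i + deg G m i)) \<and>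
     \<comment> \<open>unique factorisation property\<close>
     (\<forall>l\<in>paths G. \<forall>m n. deg G l = (\<lambda>i. m i + n i) \<longrightarrow>
         (\<exists>!(a, b). a \<in> paths G \<and> b \<in> paths G \<and> src G a = rng G b \<and>
                    deg G a = m \<and> deg G b = n \<and> cmp G a b = l))"

definition vLn :: "'p kgraph \<Rightarrow> 'p \<Rightarrow> (nat \<Rightarrow> nat) \<Rightarrow> 'p set" where
  "vLn G v n = {l \<in> paths G. rng G l = v \<and> deg G l = n}"

definition row_finite_no_sources :: "nat \<Rightarrow> 'p kgraph \<Rightarrow> bool" where
  "row_finite_no_sources k G \<longleftrightarrow>
     (\<forall>v\<in>vertices G. \<forall>n. in_Nk k n \<longrightarrow> finite (vLn G v n) \<and> vLn G v n \<noteq> {})"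

text \<open>Generators not belonging to the presentation
(p_v for non-vertices, s_lam / s_lam* for lam not a path or of degree 0) are
set equal to 0 by a relation, so they do not change the algebra.\<close>

datatype 'p kpgen = Pg 'p | Sg 'p | Ssg 'p

datatype ('p, 'r) kpt =
    Gen "'p kpgen"
  | Zero
  | Add "('p, 'r) kpt" "('p, 'r) kpt"
  | Neg "('p, 'r) kpt"
  | Mul "('p, 'r) kpt" "('p, 'r) kpt"
  | Smul 'r "('p, 'r) kpt"

text \<open>s_lam and s_lam*, with the convention s_v = s_v* = p_v for vertices
(paths of degree 0).\<close>
definition tS :: "'p kgraph \<Rightarrow> 'p \<Rightarrow> ('p, 'r) kpt" where
  "tS G l = (if deg G l = (\<lambda>i. 0) then Gen (Pg l) else Gen (Sg l))"

definition tSs :: "'p kgraph \<Rightarrow> 'p \<Rightarrow> ('p, 'r) kpt" where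
  "tSs G l = (if deg G l = (\<lambda>i. 0) then Gen (Pg l) else Gen (Ssg l))"

definition tP :: "'p \<Rightarrow> ('p, 'r) kpt" where
  "tP v = Gen (Pg v)"

definition valid_gen :: "'p kgraph \<Rightarrow> 'p kpgen \<Rightarrow> bool" where
  "valid_gen G g = (case g of
      Pg v \<Rightarrow> v \<in> vertices G
    | Sg l \<Rightarrow> l \<in> paths G \<and> deg G l \<noteq> (\<lambda>i. 0)
    | Ssg l \<Rightarrow> l \<in> paths G \<and> deg G l \<noteq> (\<lambda>i. 0))"

definition tsum :: "('p, 'r) kpt list \<Rightarrow> ('p, 'r) kpt" where
  "tsum xs = foldr Add xs Zero"

text \<open>kp_eq k G a b means: a and b are equal in KP_R(Lambda), i.e. the least
congruence on terms containing the axioms of an associative (non-unital)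
algebra over the commutative ring 'r and the relations (KP1)--(KP4).\<close>

inductive kp_eq :: "nat \<Rightarrow> 'p kgraph \<Rightarrow> ('p, 'r::comm_ring_1) kpt \<Rightarrow> ('p, 'r) kpt \<Rightarrow> bool"
  for k :: nat and G :: "'p kgraph" where
  refl: "kp_eq k G a a"
| sym: "kp_eq k G a b \<Longrightarrow> kp_eq k G b a"
| trans: "kp_eq k G a b \<Longrightarrow> kp_eq k G b c \<Longrightarrow> kp_eq k G a c"
| cong_add: "kp_eq k G a a' \<Longrightarrow> kp_eq k G b b' \<Longrightarrow> kp_eq k G (Add a b) (Add a' b')"
| cong_neg: "kp_eq k G a a' \<Longrightarrow> kp_eq k G (Neg a) (Neg a')"
| cong_mul: "kp_eq k G a a' \<Longrightarrow> kp_eq k G b b' \<Longrightarrow> kp_eq k G (Mul a b) (Mul a' b')"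
| cong_smul: "kp_eq k G a a' \<Longrightarrow> kp_eq k G (Smul c a) (Smul c a')"
| add_assoc: "kp_eq k G (Add (Add a b) c) (Add a (Add b c))"
| add_comm: "kp_eq k G (Add a b) (Add b a)"
| add_zero: "kp_eq k G (Add a Zero) a"
| add_neg: "kp_eq k G (Add a (Neg a)) Zero"
| mul_assoc: "kp_eq k G (Mul (Mul a b) c) (Mul a (Mul b c))"
| distl: "kp_eq k G (Mul a (Add b c)) (Add (Mul a b) (Mul a c))"
| distr: "kp_eq k G (Mul (Add a b) c) (Add (Mul a c) (Mul b c))"
| smul_add: "kp_eq k G (Smul r (Add a b)) (Add (Smul r a) (Smul r b))"
| smul_radd: "kp_eq k G (Smul (r + r') a) (Add (Smul r a) (Smul r' a))"
| smul_mult: "kp_eq k G (Smul (r * r') a) (Smul r (Smul r' a))"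
| smul_one: "kp_eq k G (Smul 1 a) a"
| smul_mul_left: "kp_eq k G (Smul r (Mul a b)) (Mul (Smul r a) b)"
| smul_mul_right: "kp_eq k G (Smul r (Mul a b)) (Mul a (Smul r b))"
| invalid: "\<not> valid_gen G g \<Longrightarrow> kp_eq k G (Gen g) Zero"
| KP1a: "v \<in> vertices G \<Longrightarrow> kp_eq k G (Mul (tP v) (tP v)) (tP v)"
| KP1b: "v \<in> vertices G \<Longrightarrow> w \<in> vertices G \<Longrightarrow> v \<noteq> w \<Longrightarrow> kp_eq k G (Mul (tP v) (tP w)) Zero"
| KP2a: "l \<in> paths G \<Longrightarrow> m \<in> paths G \<Longrightarrow> rng G m = src G l \<Longrightarrow>
         kp_eq k G (Mul (tS G l) (tS G m)) (tS G (cmp G l m))"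
| KP2b: "l \<in> paths G \<Longrightarrow> m \<in> paths G \<Longrightarrow> rng G m = src G l \<Longrightarrow>
         kp_eq k G (Mul (tSs G m) (tSs G l)) (tSs G (cmp G l m))"
| KP2c: "l \<in> paths G \<Longrightarrow> kp_eq k G (Mul (tP (rng G l)) (tS G l)) (tS G l)"
| KP2d: "l \<in> paths G \<Longrightarrow> kp_eq k G (Mul (tS G l) (tP (src G l))) (tS G l)"
| KP2e: "l \<in> paths G \<Longrightarrow> kp_eq k G (Mul (tP (src G l)) (tSs G l)) (tSs G l)"
| KP2f: "l \<in> paths G \<Longrightarrow> kp_eq k G (Mul (tSs G l) (tP (rng G l))) (tSs G l)"
| KP3: "l \<in> paths G \<Longrightarrow> m \<in> paths G \<Longrightarrow> deg G l = deg G m \<Longrightarrow>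
        kp_eq k G (Mul (tSs G l) (tS G m)) (if l = m then tP (src G l) else Zero)"
  \<comment> \<open>(KP4): the (finite) sum over v Lambda^n, written via any enumeration\<close>
| KP4: "v \<in> vertices G \<Longrightarrow> in_Nk k n \<Longrightarrow> n \<noteq> (\<lambda>i. 0) \<Longrightarrow>
        distinct ls \<Longrightarrow> set ls = vLn G v n \<Longrightarrow>
        kp_eq k G (tP v) (tsum (map (\<lambda>l. Mul (tS G l) (tSs G l)) ls))"

text \<open>The (term representatives of the) R-subalgebra D generated by the
s_mu s_mu*.\<close>
inductive_set kp_D :: "nat \<Rightarrow> 'p kgraph \<Rightarrow> ('p, 'r::comm_ring_1) kpt set"
  for k :: nat and G :: "'p kgraph" where
  gen: "m \<in> paths G \<Longrightarrow> Mul (tS G m) (tSs G m) \<in> kp_D k G"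
| zero: "Zero \<in> kp_D k G"
| add: "a \<in> kp_D k G \<Longrightarrow> b \<in> kp_D k G \<Longrightarrow> Add a b \<in> kp_D k G"
| neg: "a \<in> kp_D k G \<Longrightarrow> Neg a \<in> kp_D k G"
| mul: "a \<in> kp_D k G \<Longrightarrow> b \<in> kp_D k G \<Longrightarrow> Mul a b \<in> kp_D k G"
| smul: "a \<in> kp_D k G \<Longrightarrow> Smul c a \<in> kp_D k G"

definition kp_in_D' :: "nat \<Rightarrow> 'p kgraph \<Rightarrow> ('p, 'r::comm_ring_1) kpt \<Rightarrow> bool" where
  "kp_in_D' k G a \<longleftrightarrow> (\<forall>d\<in>kp_D k G. kp_eq k G (Mul a d) (Mul d a))"

end

theory Submission
  imports Defs
begin

definition madd :: "(nat\<Rightarrow>nat) \<Rightarrow> (nat\<Rightarrow>nat) \<Rightarrow> nat \<Rightarrow> nat" where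
  "madd m n = (\<lambda>i. m i + n i)"
definition msub :: "(nat\<Rightarrow>nat) \<Rightarrow> (nat\<Rightarrow>nat) \<Rightarrow> nat \<Rightarrow> nat" where
  "msub m n = (\<lambda>i. m i - n i)"
definition mle :: "(nat\<Rightarrow>nat) \<Rightarrow> (nat\<Rightarrow>nat) \<Rightarrow> bool" where
  "mle m n \<longleftrightarrow> (\<forall>i. m i \<le> n i)"

lemma madd_0[simp]: "madd (\<lambda>i. 0) n = n" "madd n (\<lambda>i. 0) = n" by (auto simp: madd_def)
lemma msub_madd[simp]: "msub (madd d n) d = n" by (auto simp: madd_def msub_def)
lemma mle_madd[simp]: "mle d (madd d n)" by (auto simp: madd_def mle_def)
lemma mle_refl[simp]: "mle d d" by (auto simp: mle_def)
lemma mle_0[simp]: "mle (\<lambda>i. 0) d" by (auto simp: mle_def)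
lemma madd_msub: "mle m n \<Longrightarrow> madd m (msub n m) = n" by (auto simp: madd_def msub_def mle_def fun_eq_iff)
lemma madd_assoc: "madd (madd a b) c = madd a (madd b c)" by (auto simp: madd_def)
lemma madd_comm: "madd a b = madd b a" by (auto simp: madd_def)
lemma in_Nk_madd[simp]: "in_Nk k (madd a b) \<longleftrightarrow> in_Nk k a \<and> in_Nk k b" by (auto simp: madd_def in_Nk_def)
lemma in_Nk_msub: "in_Nk k a \<Longrightarrow> in_Nk k (msub a b)" by (auto simp: msub_def in_Nk_def)
lemma in_Nk_mle: "mle a b \<Longrightarrow> in_Nk k b \<Longrightarrow> in_Nk k a" by (auto simp: mle_def in_Nk_def) (metis le_zero_eq)
lemma in_Nk_0[simp]: "in_Nk k (\<lambda>i. 0)" by (auto simp: in_Nk_def)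
lemma mle_trans: "mle a b \<Longrightarrow> mle b c \<Longrightarrow> mle a c" by (auto simp: mle_def intro: order_trans)
lemma mle_madd_mono: "mle a b \<Longrightarrow> mle (madd d a) (madd d b)" by (auto simp: mle_def madd_def)
lemma madd_cancel[simp]: "madd d a = madd d b \<longleftrightarrow> a = b" by (auto simp: madd_def fun_eq_iff)

locale kg =
  fixes k :: nat and G :: "'p kgraph"
  assumes kg: "is_kgraph k G"
begin

abbreviation "PP \<equiv> paths G"

lemmas kgc = kg[unfolded is_kgraph_def]
lemmas c_rs = kgc[THEN conjunct2, THEN conjunct1]
lemmas c_rr = kgc[THEN conjunct2, THEN conjunct2, THEN conjunct1]
lemmas c_id = kgc[THEN conjunct2, THEN conjunct2, THEN conjunct2, THEN conjunct1]
lemmas c_cmp = kgc[THEN conjunct2, THEN conjunct2, THEN conjunct2, THEN conjunct2, THEN conjunct1]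
lemmas c_assoc = kgc[THEN conjunct2, THEN conjunct2, THEN conjunct2, THEN conjunct2, THEN conjunct2, THEN conjunct1]
lemmas c_deg = kgc[THEN conjunct2, THEN conjunct2, THEN conjunct2, THEN conjunct2, THEN conjunct2, THEN conjunct2, THEN conjunct1]
lemmas c_degc = kgc[THEN conjunct2, THEN conjunct2, THEN conjunct2, THEN conjunct2, THEN conjunct2, THEN conjunct2, THEN conjunct2, THEN conjunct1]
lemmas c_fac = kgc[THEN conjunct2, THEN conjunct2, THEN conjunct2, THEN conjunct2, THEN conjunct2, THEN conjunct2, THEN conjunct2, THEN conjunct2]

lemma P_rng: "l \<in> PP \<Longrightarrow> rng G l \<in> PP" and P_src: "l \<in> PP \<Longrightarrow> src G l \<in> PP"
  using c_rs by blast+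

lemma rng_rng[simp]: "l \<in> PP \<Longrightarrow> rng G (rng G l) = rng G l"
  and src_rng[simp]: "l \<in> PP \<Longrightarrow> src G (rng G l) = rng G l"
  and rng_src[simp]: "l \<in> PP \<Longrightarrow> rng G (src G l) = src G l"
  and src_src[simp]: "l \<in> PP \<Longrightarrow> src G (src G l) = src G l"
  using c_rr by blast+

lemma cmp_rng[simp]: "l \<in> PP \<Longrightarrow> cmp G (rng G l) l = l"
  and cmp_src[simp]: "l \<in> PP \<Longrightarrow> cmp G l (src G l) = l"
  using c_id by blast+

lemma cmp_P: "l \<in> PP \<Longrightarrow> m \<in> PP \<Longrightarrow> src G l = rng G m \<Longrightarrow> cmp G l m \<in> PP"
  and rng_cmp: "l \<in> PP \<Longrightarrow> m \<in> PP \<Longrightarrow> src G l = rng G m \<Longrightarrow> rng G (cmp G l m) = rng G l"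
  and src_cmp: "l \<in> PP \<Longrightarrow> m \<in> PP \<Longrightarrow> src G l = rng G m \<Longrightarrow> src G (cmp G l m) = src G m"
  using c_cmp by blast+

lemma cmp_assoc: "l \<in> PP \<Longrightarrow> m \<in> PP \<Longrightarrow> n \<in> PP \<Longrightarrow> src G l = rng G m \<Longrightarrow> src G m = rng G n \<Longrightarrow>
   cmp G (cmp G l m) n = cmp G l (cmp G m n)"
  using c_assoc by blast

lemma deg_Nk: "l \<in> PP \<Longrightarrow> in_Nk k (deg G l)"
  using c_deg by blast

lemma deg_cmp: "l \<in> PP \<Longrightarrow> m \<in> PP \<Longrightarrow> src G l = rng G m \<Longrightarrow> deg G (cmp G l m) = madd (deg G l) (deg G m)"
  using c_degc unfolding madd_def by blast

lemma fac_ex1: "l \<in> PP \<Longrightarrow> deg G l = madd m n \<Longrightarrow>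
   \<exists>!(a, b). a \<in> PP \<and> b \<in> PP \<and> src G a = rng G b \<and> deg G a = m \<and> deg G b = n \<and> cmp G a b = l"
  using c_fac unfolding madd_def by blast

lemma deg_rng[simp]: "l \<in> PP \<Longrightarrow> deg G (rng G l) = (\<lambda>i. 0)"
proof -
  assume l: "l \<in> PP"
  have "deg G (cmp G (rng G l) l) = madd (deg G (rng G l)) (deg G l)"
    using l by (intro deg_cmp) (auto simp: P_rng)
  then have "deg G l = madd (deg G (rng G l)) (deg G l)" using l by simp
  then show ?thesis by (auto simp: madd_def fun_eq_iff)
qed

lemma deg_src[simp]: "l \<in> PP \<Longrightarrow> deg G (src G l) = (\<lambda>i. 0)"
  using deg_rng[OF P_src] by (metis rng_src)

lemma deg0_vertex: assumes l: "l \<in> PP" and d: "deg G l = (\<lambda>i. 0)"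
  shows "rng G l = l" "src G l = l"
proof -
  have "deg G l = madd (\<lambda>i. 0) (\<lambda>i. 0)" using d by simp
  from fac_ex1[OF l this] have u: "\<exists>!(a, b). a \<in> PP \<and> b \<in> PP \<and> src G a = rng G b \<and> deg G a = (\<lambda>i. 0) \<and> deg G b = (\<lambda>i. 0) \<and> cmp G a b = l" .
  have "(THE p. (\<lambda>(a, b). a \<in> PP \<and> b \<in> PP \<and> src G a = rng G b \<and> deg G a = (\<lambda>i. 0) \<and> deg G b = (\<lambda>i. 0) \<and> cmp G a b = l) p) = (rng G l, l)"
    apply (rule the1_equality[OF u])
    using l d by (auto simp: P_rng P_src)
  moreover have "(THE p. (\<lambda>(a, b). a \<in> PP \<and> b \<in> PP \<and> src G a = rng G b \<and> deg G a = (\<lambda>i. 0) \<and> deg G b = (\<lambda>i. 0) \<and> cmp G a b = l) p) = (l, src G l)"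
    apply (rule the1_equality[OF u])
    using l d by (auto simp: P_rng P_src)
  ultimately have "(rng G l, l) = (l, src G l)" by simp
  then show "rng G l = l" "src G l = l" by auto
qed

lemma vertices_iff: "v \<in> vertices G \<longleftrightarrow> v \<in> PP \<and> deg G v = (\<lambda>i. 0)"
  unfolding vertices_def using deg0_vertex by (metis (mono_tags, lifting) deg_rng mem_Collect_eq)

lemma rng_vertex: "l \<in> PP \<Longrightarrow> rng G l \<in> vertices G" and src_vertex: "l \<in> PP \<Longrightarrow> src G l \<in> vertices G"
  by (auto simp: vertices_def P_rng P_src)

definition fac :: "'p \<Rightarrow> (nat \<Rightarrow> nat) \<Rightarrow> 'p \<times> 'p" where
  "fac l m = (THE (a, b). a \<in> PP \<and> b \<in> PP \<and> src G a = rng G b \<and> deg G a = m \<and> deg G b = msub (deg G l) m \<and> cmp G a b = l)"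
definition "pre l m = fst (fac l m)"
definition "suf l m = snd (fac l m)"

lemma fac_props: assumes l: "l \<in> PP" and m: "mle m (deg G l)"
  shows "pre l m \<in> PP" "suf l m \<in> PP" "src G (pre l m) = rng G (suf l m)" "deg G (pre l m) = m"
    "deg G (suf l m) = msub (deg G l) m" "cmp G (pre l m) (suf l m) = l"
proof -
  have "deg G l = madd m (msub (deg G l) m)" using m by (simp add: madd_msub)
  from theI'[OF fac_ex1[OF l this]]
  show "pre l m \<in> PP" "suf l m \<in> PP" "src G (pre l m) = rng G (suf l m)" "deg G (pre l m) = m"
    "deg G (suf l m) = msub (deg G l) m" "cmp G (pre l m) (suf l m) = l"
    unfolding pre_def suf_def fac_def by (auto split: prod.splits)
qed

lemma fac_cmp: assumes a: "a \<in> PP" and b: "b \<in> PP" and s: "src G a = rng G b"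
  shows "pre (cmp G a b) (deg G a) = a" "suf (cmp G a b) (deg G a) = b"
proof -
  have l: "cmp G a b \<in> PP" using a b s by (rule cmp_P)
  have dl: "deg G (cmp G a b) = madd (deg G a) (deg G b)" using a b s by (rule deg_cmp)
  have "fac (cmp G a b) (deg G a) = (a, b)"
    unfolding fac_def dl msub_madd
    apply (rule the1_equality[OF fac_ex1[OF l dl]])
    using a b s by auto
  then show "pre (cmp G a b) (deg G a) = a" "suf (cmp G a b) (deg G a) = b"
    by (auto simp: pre_def suf_def)
qed


lemma pre_0: "l \<in> PP \<Longrightarrow> pre l (\<lambda>i. 0) = rng G l"
  and suf_0: "l \<in> PP \<Longrightarrow> suf l (\<lambda>i. 0) = l"
  using fac_cmp[of "rng G l" l] by (auto simp: P_rng)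

lemma pre_full: "l \<in> PP \<Longrightarrow> pre l (deg G l) = l"
  and suf_full: "l \<in> PP \<Longrightarrow> suf l (deg G l) = src G l"
  using fac_cmp[of l "src G l"] by (auto simp: P_src)

lemma pre_cmp: assumes a: "a \<in> PP" and b: "b \<in> PP" and s: "src G a = rng G b" and e: "mle e (deg G a)"
  shows "pre (cmp G a b) e = pre a e" "suf (cmp G a b) e = cmp G (suf a e) b"
proof -
  note f = fac_props[OF a e]
  have s2: "src G (suf a e) = rng G b" using src_cmp[OF f(1,2,3)] f(6) s by simp
  have c2: "cmp G (suf a e) b \<in> PP" using f(2) b s2 by (rule cmp_P)
  have r2: "rng G (cmp G (suf a e) b) = rng G (suf a e)" using f(2) b s2 by (rule rng_cmp)
  have eq: "cmp G a b = cmp G (pre a e) (cmp G (suf a e) b)"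
    using cmp_assoc[OF f(1,2) b f(3) s2] f(6) by simp
  show "pre (cmp G a b) e = pre a e" "suf (cmp G a b) e = cmp G (suf a e) b"
    using fac_cmp[OF f(1) c2] r2 f(3,4) eq by auto
qed

lemma deg_pre: "l \<in> PP \<Longrightarrow> mle m (deg G l) \<Longrightarrow> deg G (pre l m) = m"
  using fac_props by blast
lemma P_pre: "l \<in> PP \<Longrightarrow> mle m (deg G l) \<Longrightarrow> pre l m \<in> PP"
  using fac_props by blast
lemma P_suf: "l \<in> PP \<Longrightarrow> mle m (deg G l) \<Longrightarrow> suf l m \<in> PP"
  using fac_props by blast
lemma deg_suf: "l \<in> PP \<Longrightarrow> mle m (deg G l) \<Longrightarrow> deg G (suf l m) = msub (deg G l) m"
  using fac_props by blast

lemma pre_pre: assumes l: "l \<in> PP" and "mle b a" "mle a (deg G l)"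
  shows "pre (pre l a) b = pre l b"
proof -
  note f = fac_props[OF l assms(3)]
  have "pre (cmp G (pre l a) (suf l a)) b = pre (pre l a) b"
    using pre_cmp(1)[OF f(1,2,3)] f(4) assms by simp
  then show ?thesis using f(6) by simp
qed

lemma suf_suf: assumes l: "l \<in> PP" and le: "mle (madd a b) (deg G l)"
  shows "suf (suf l a) b = suf l (madd a b)"
proof -
  have la: "mle a (deg G l)" using le unfolding mle_def madd_def by (metis add_leD1)
  note f = fac_props[OF l la]
  have lb: "mle b (deg G (suf l a))" using f(5) le unfolding mle_def madd_def msub_def
    by (metis add.commute le_diff_conv2 le_add2 order_trans)
  note g = fac_props[OF f(2) lb]
  have sa: "src G (pre l a) = rng G (pre (suf l a) b)"
    using f(3) rng_cmp[OF g(1,2,3)] g(6) by simp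
  have c1: "cmp G (pre l a) (pre (suf l a) b) \<in> PP" using f(1) g(1) sa by (rule cmp_P)
  have s1: "src G (cmp G (pre l a) (pre (suf l a) b)) = rng G (suf (suf l a) b)"
    using src_cmp[OF f(1) g(1) sa] g(3) by simp
  have "l = cmp G (cmp G (pre l a) (pre (suf l a) b)) (suf (suf l a) b)"
    using cmp_assoc[OF f(1) g(1) g(2) sa g(3)] g(6) f(6) by simp
  moreover have "deg G (cmp G (pre l a) (pre (suf l a) b)) = madd a b"
    using deg_cmp[OF f(1) g(1) sa] f(4) g(4) by simp
  ultimately show ?thesis using fac_cmp(2)[OF c1 g(2) s1] by simp
qed

lemma pre_suf: assumes l: "l \<in> PP" and le: "mle (madd d n) (deg G l)"
  shows "pre (suf l d) n = suf (pre l (madd d n)) d"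
proof -
  note f = fac_props[OF l le]
  have dA: "mle d (deg G (pre l (madd d n)))" using f(4) by simp
  have "suf l d = suf (cmp G (pre l (madd d n)) (suf l (madd d n))) d" using f(6) by simp
  also have "\<dots> = cmp G (suf (pre l (madd d n)) d) (suf l (madd d n))"
    using pre_cmp(2)[OF f(1,2,3) dA] .
  finally have eq: "suf l d = cmp G (suf (pre l (madd d n)) d) (suf l (madd d n))" .
  note g = fac_props[OF f(1) dA]
  have s: "src G (suf (pre l (madd d n)) d) = rng G (suf l (madd d n))"
    using src_cmp[OF g(1,2,3)] g(6) f(3) by simp
  have dg: "deg G (suf (pre l (madd d n)) d) = n" using g(5) f(4) by simp
  show ?thesis using fac_cmp(1)[OF g(2) f(2) s] eq dg by simp
qed

end


lemma mle_madd2[simp]: "mle n (madd a n)" by (auto simp: madd_def mle_def)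

context kg begin

definition ip :: "((nat \<Rightarrow> nat) \<Rightarrow> 'p) \<Rightarrow> bool" where
  "ip x \<longleftrightarrow> (\<forall>n. in_Nk k n \<longrightarrow> x n \<in> PP \<and> deg G (x n) = n) \<and> (\<forall>n. \<not> in_Nk k n \<longrightarrow> x n = undefined)
     \<and> (\<forall>n m. in_Nk k m \<longrightarrow> mle n m \<longrightarrow> pre (x m) n = x n)"

definition shift :: "(nat \<Rightarrow> nat) \<Rightarrow> ((nat \<Rightarrow> nat) \<Rightarrow> 'p) \<Rightarrow> (nat \<Rightarrow> nat) \<Rightarrow> 'p" where
  "shift d x = (\<lambda>n. if in_Nk k n then suf (x (madd d n)) d else undefined)"

definition cat :: "'p \<Rightarrow> ((nat \<Rightarrow> nat) \<Rightarrow> 'p) \<Rightarrow> (nat \<Rightarrow> nat) \<Rightarrow> 'p" where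
  "cat l x = (\<lambda>n. if in_Nk k n then pre (cmp G l (x n)) n else undefined)"

lemma ipD: assumes "ip x"
  shows "in_Nk k n \<Longrightarrow> x n \<in> PP" "in_Nk k n \<Longrightarrow> deg G (x n) = n" "\<not> in_Nk k n \<Longrightarrow> x n = undefined"
    "in_Nk k m \<Longrightarrow> mle n m \<Longrightarrow> pre (x m) n = x n"
  using assms unfolding ip_def by blast+

lemma ip_rng: "ip x \<Longrightarrow> in_Nk k n \<Longrightarrow> rng G (x n) = x (\<lambda>i. 0)"
  using ipD[of x] pre_0 by (metis mle_0)

lemma ip_dec: assumes x: "ip x" and m: "in_Nk k m" and nm: "mle n m"
  shows "x m = cmp G (x n) (suf (x m) n)" "suf (x m) n \<in> PP" "src G (x n) = rng G (suf (x m) n)"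
proof -
  have d: "mle n (deg G (x m))" using ipD(2)[OF x m] nm by simp
  note f = fac_props[OF ipD(1)[OF x m] d]
  show "x m = cmp G (x n) (suf (x m) n)" "suf (x m) n \<in> PP" "src G (x n) = rng G (suf (x m) n)"
    using f ipD(4)[OF x m nm] by auto
qed

lemma ip_shift: assumes x: "ip x" and d: "in_Nk k d" shows "ip (shift d x)"
  unfolding ip_def
proof (intro conjI allI impI)
  fix n assume n: "in_Nk k n"
  have L: "x (madd d n) \<in> PP" "deg G (x (madd d n)) = madd d n" using ipD[OF x] d n by auto
  show "shift d x n \<in> PP" "deg G (shift d x n) = n"
    using n L P_suf[OF L(1)] deg_suf[OF L(1)] by (auto simp: shift_def)
next
  fix n assume "\<not> in_Nk k n" then show "shift d x n = undefined" by (simp add: shift_def)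
next
  fix n m assume m: "in_Nk k m" and nm: "mle n m"
  have n: "in_Nk k n" using in_Nk_mle[OF nm m] .
  have L: "x (madd d m) \<in> PP" "deg G (x (madd d m)) = madd d m" using ipD[OF x] d m by auto
  have "pre (suf (x (madd d m)) d) n = suf (pre (x (madd d m)) (madd d n)) d"
    using pre_suf[OF L(1)] L(2) mle_madd_mono[OF nm] by simp
  also have "\<dots> = suf (x (madd d n)) d" using ipD(4)[OF x _ mle_madd_mono[OF nm]] d m by simp
  finally show "pre (shift d x m) n = shift d x n" using m n by (simp add: shift_def)
qed

lemma shift_at0: "ip x \<Longrightarrow> in_Nk k d \<Longrightarrow> shift d x (\<lambda>i. 0) = src G (x d)"
  unfolding shift_def using ipD[of x d] suf_full by (metis in_Nk_0 madd_0(2))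

lemma shift_shift: assumes x: "ip x" and a: "in_Nk k a" and b: "in_Nk k b"
  shows "shift b (shift a x) = shift (madd a b) x"
proof
  fix n show "shift b (shift a x) n = shift (madd a b) x n"
  proof (cases "in_Nk k n")
    case True
    have L: "x (madd a (madd b n)) \<in> PP" "deg G (x (madd a (madd b n))) = madd a (madd b n)"
      using ipD[OF x] a b True by auto
    have "mle (madd a b) (madd a (madd b n))" by (simp add: madd_assoc[symmetric])
    then show ?thesis using True b suf_suf[OF L(1)] L(2)
      by (simp add: shift_def madd_assoc)
  qed (simp add: shift_def)
qed

lemma ip_cmp_iff: assumes x: "ip x" and l: "l \<in> PP" and m: "m \<in> PP" and s: "src G l = rng G m"
  shows "x (madd (deg G l) (deg G m)) = cmp G l m \<longleftrightarrow> x (deg G l) = l \<and> shift (deg G l) x (deg G m) = m"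
proof -
  let ?L = "x (madd (deg G l) (deg G m))"
  have N: "in_Nk k (madd (deg G l) (deg G m))" using deg_Nk l m by simp
  have L: "?L \<in> PP" "deg G ?L = madd (deg G l) (deg G m)" using ipD(1,2)[OF x N] by auto
  note f = fac_props[OF L(1), of "deg G l"]
  have pre: "pre ?L (deg G l) = x (deg G l)" using ipD(4)[OF x N] by simp
  have sh: "shift (deg G l) x (deg G m) = suf ?L (deg G l)" using deg_Nk[OF m] by (simp add: shift_def)
  show ?thesis
  proof
    assume "?L = cmp G l m" then show "x (deg G l) = l \<and> shift (deg G l) x (deg G m) = m"
      using fac_cmp[OF l m s] pre sh by metis
  next
    assume "x (deg G l) = l \<and> shift (deg G l) x (deg G m) = m"
    then show "?L = cmp G l m" using f L(2) pre sh by simp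
  qed
qed

lemma ip_cat: assumes x: "ip x" and l: "l \<in> PP" and s: "x (\<lambda>i. 0) = src G l" shows "ip (cat l x)"
  unfolding ip_def
proof (intro conjI allI impI)
  fix n assume n: "in_Nk k n"
  have sr: "src G l = rng G (x n)" using ip_rng[OF x n] s by simp
  have c: "cmp G l (x n) \<in> PP" "deg G (cmp G l (x n)) = madd (deg G l) n"
    using cmp_P[OF l ipD(1)[OF x n] sr] deg_cmp[OF l ipD(1)[OF x n] sr] ipD(2)[OF x n] by auto
  show "cat l x n \<in> PP" "deg G (cat l x n) = n" using n c P_pre deg_pre by (auto simp: cat_def)
next
  fix n assume "\<not> in_Nk k n" then show "cat l x n = undefined" by (simp add: cat_def)
next
  fix n m assume m: "in_Nk k m" and nm: "mle n m"
  have n: "in_Nk k n" using in_Nk_mle[OF nm m] .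
  have srm: "src G l = rng G (x m)" using ip_rng[OF x m] s by simp
  have srn: "src G l = rng G (x n)" using ip_rng[OF x n] s by simp
  have cm: "cmp G l (x m) \<in> PP" "deg G (cmp G l (x m)) = madd (deg G l) m"
    using cmp_P[OF l ipD(1)[OF x m] srm] deg_cmp[OF l ipD(1)[OF x m] srm] ipD(2)[OF x m] by auto
  have cn: "cmp G l (x n) \<in> PP" "deg G (cmp G l (x n)) = madd (deg G l) n"
    using cmp_P[OF l ipD(1)[OF x n] srn] deg_cmp[OF l ipD(1)[OF x n] srn] ipD(2)[OF x n] by auto
  note dm = ip_dec[OF x m nm]
  have e1: "pre (pre (cmp G l (x m)) m) n = pre (cmp G l (x m)) n"
    using pre_pre[OF cm(1) nm] cm(2) by simp
  have e2: "cmp G l (x m) = cmp G (cmp G l (x n)) (suf (x m) n)"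
    using cmp_assoc[OF l ipD(1)[OF x n] dm(2) srn dm(3)] dm(1) by simp
  have e3: "pre (cmp G (cmp G l (x n)) (suf (x m) n)) n = pre (cmp G l (x n)) n"
    using pre_cmp(1)[OF cn(1) dm(2)] src_cmp[OF l ipD(1)[OF x n] srn] dm(3) cn(2) by simp
  from e1 e2 e3 show "pre (cat l x m) n = cat l x n" using m n by (simp add: cat_def)
qed

lemma cat_at0: "ip x \<Longrightarrow> l \<in> PP \<Longrightarrow> x (\<lambda>i. 0) = src G l \<Longrightarrow> cat l x (\<lambda>i. 0) = rng G l"
  unfolding cat_def using ipD[of x "\<lambda>i. 0"] by (simp add: pre_0 cmp_P rng_cmp ip_rng)

lemma cat_cat: assumes x: "ip x" and l: "l \<in> PP" and m: "m \<in> PP" and s: "src G l = rng G m"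
  and s0: "x (\<lambda>i. 0) = src G m"
  shows "cat l (cat m x) = cat (cmp G l m) x"
proof
  fix n show "cat l (cat m x) n = cat (cmp G l m) x n"
  proof (cases "in_Nk k n")
    case n: True
    have srn: "src G m = rng G (x n)" using ip_rng[OF x n] s0 by simp
    let ?M = "cmp G m (x n)"
    have M: "?M \<in> PP" "deg G ?M = madd (deg G m) n" "rng G ?M = rng G m"
      using cmp_P[OF m ipD(1)[OF x n] srn] deg_cmp[OF m ipD(1)[OF x n] srn] ipD(2)[OF x n]
        rng_cmp[OF m ipD(1)[OF x n] srn] by auto
    note f = fac_props[OF M(1), of n]
    have f1: "pre ?M n \<in> PP" "suf ?M n \<in> PP" "src G (pre ?M n) = rng G (suf ?M n)" "deg G (pre ?M n) = n"
       "cmp G (pre ?M n) (suf ?M n) = ?M" using f M(2) by auto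
    have s2: "src G l = rng G (pre ?M n)" using rng_cmp[OF f1(1,2,3)] f1(5) M(3) s by simp
    have "cmp G l ?M = cmp G (cmp G l (pre ?M n)) (suf ?M n)"
      using cmp_assoc[OF l f1(1,2) s2 f1(3)] f1(5) by simp
    then have "pre (cmp G l ?M) n = pre (cmp G l (pre ?M n)) n"
      using pre_cmp(1)[OF cmp_P[OF l f1(1) s2] f1(2)] src_cmp[OF l f1(1) s2] f1(3)
        deg_cmp[OF l f1(1) s2] f1(4) by simp
    moreover have "cmp G (cmp G l m) (x n) = cmp G l ?M"
      using cmp_assoc[OF l m ipD(1)[OF x n] s srn] .
    ultimately show ?thesis using n by (simp add: cat_def)
  qed (simp add: cat_def)
qed

lemma cat_deg: "ip x \<Longrightarrow> l \<in> PP \<Longrightarrow> x (\<lambda>i. 0) = src G l \<Longrightarrow> cat l x (deg G l) = l"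
  unfolding cat_def using deg_Nk[of l] ip_rng[of x "deg G l"] ipD[of x "deg G l"] fac_cmp(1)[of l "x (deg G l)"]
  by simp

lemma shift_cat: assumes x: "ip x" and l: "l \<in> PP" and s: "x (\<lambda>i. 0) = src G l"
  shows "shift (deg G l) (cat l x) = x"
proof
  fix n show "shift (deg G l) (cat l x) n = x n"
  proof (cases "in_Nk k n")
    case n: True
    have N: "in_Nk k (madd (deg G l) n)" using n deg_Nk[OF l] by simp
    note dm = ip_dec[OF x N mle_madd2]
    have srn: "src G l = rng G (x n)" using ip_rng[OF x n] s by simp
    have c: "cmp G l (x (madd (deg G l) n)) = cmp G (cmp G l (x n)) (suf (x (madd (deg G l) n)) n)"
      using cmp_assoc[OF l ipD(1)[OF x n] dm(2) srn dm(3)] dm(1) by simp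
    have dc: "deg G (cmp G l (x n)) = madd (deg G l) n" using deg_cmp[OF l ipD(1)[OF x n] srn] ipD(2)[OF x n] by simp
    have "pre (cmp G l (x (madd (deg G l) n))) (madd (deg G l) n) = cmp G l (x n)"
      using c fac_cmp(1)[OF cmp_P[OF l ipD(1)[OF x n] srn] dm(2)] src_cmp[OF l ipD(1)[OF x n] srn] dm(3) dc
      by simp
    then show ?thesis using n N fac_cmp(2)[OF l ipD(1)[OF x n] srn] by (simp add: shift_def cat_def)
  qed (simp add: shift_def cat_def ipD(3)[OF x])
qed

lemma cat_shift: assumes x: "ip x" and n: "in_Nk k n" shows "cat (x n) (shift n x) = x"
proof
  fix m show "cat (x n) (shift n x) m = x m"
  proof (cases "in_Nk k m")
    case m: True
    have N: "in_Nk k (madd n m)" using n m by simp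
    note dm = ip_dec[OF x N, of n]
    have "pre (x (madd n m)) m = x m" using ipD(4)[OF x N, of m] by (simp add: madd_comm[of n m])
    then show ?thesis using m dm by (simp add: shift_def cat_def)
  qed (simp add: cat_def ipD(3)[OF x])
qed

lemma shift_zero: assumes x: "ip x" shows "shift (\<lambda>i. 0) x = x"
proof
  fix n show "shift (\<lambda>i. 0) x n = x n"
    by (cases "in_Nk k n") (simp_all add: shift_def suf_0 ipD(1,3)[OF x])
qed

lemma cat_vertex: assumes x: "ip x" shows "cat (x (\<lambda>i. 0)) x = x"
proof
  fix n show "cat (x (\<lambda>i. 0)) x n = x n"
  proof (cases "in_Nk k n")
    case True
    have "cmp G (x (\<lambda>i. 0)) (x n) = x n" using ip_rng[OF x True] cmp_rng[OF ipD(1)[OF x True]] by simp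
    then show ?thesis using True pre_full[OF ipD(1)[OF x True]] ipD(2)[OF x True] by (simp add: cat_def)
  qed (simp add: cat_def ipD(3)[OF x])
qed

end


context kg begin

definition opP :: "'p \<Rightarrow> (((nat\<Rightarrow>nat)\<Rightarrow>'p) \<Rightarrow> 'r::comm_ring_1) \<Rightarrow> ((nat\<Rightarrow>nat)\<Rightarrow>'p) \<Rightarrow> 'r" where
  "opP v f x = (if ip x \<and> x (\<lambda>i. 0) = v then f x else 0)"
definition opS :: "'p \<Rightarrow> (((nat\<Rightarrow>nat)\<Rightarrow>'p) \<Rightarrow> 'r::comm_ring_1) \<Rightarrow> ((nat\<Rightarrow>nat)\<Rightarrow>'p) \<Rightarrow> 'r" where
  "opS l f x = (if ip x \<and> x (deg G l) = l then f (shift (deg G l) x) else 0)"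
definition opSs :: "'p \<Rightarrow> (((nat\<Rightarrow>nat)\<Rightarrow>'p) \<Rightarrow> 'r::comm_ring_1) \<Rightarrow> ((nat\<Rightarrow>nat)\<Rightarrow>'p) \<Rightarrow> 'r" where
  "opSs l f x = (if ip x \<and> x (\<lambda>i. 0) = src G l then f (cat l x) else 0)"

primrec ev :: "('p, 'r::comm_ring_1) kpt \<Rightarrow> (((nat\<Rightarrow>nat)\<Rightarrow>'p) \<Rightarrow> 'r) \<Rightarrow> ((nat\<Rightarrow>nat)\<Rightarrow>'p) \<Rightarrow> 'r" where
  "ev (Gen g) = (if valid_gen G g then (case g of Pg v \<Rightarrow> opP v | Sg l \<Rightarrow> opS l | Ssg l \<Rightarrow> opSs l) else (\<lambda>f x. 0))"
| "ev Zero = (\<lambda>f x. 0)"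
| "ev (Add a b) = (\<lambda>f x. ev a f x + ev b f x)"
| "ev (Neg a) = (\<lambda>f x. - ev a f x)"
| "ev (Mul a b) = (\<lambda>f. ev a (ev b f))"
| "ev (Smul c a) = (\<lambda>f x. c * ev a f x)"

definition lin :: "((((nat\<Rightarrow>nat)\<Rightarrow>'p) \<Rightarrow> 'r::comm_ring_1) \<Rightarrow> ((nat\<Rightarrow>nat)\<Rightarrow>'p) \<Rightarrow> 'r) \<Rightarrow> bool" where
  "lin T \<longleftrightarrow> (\<forall>f g. T (\<lambda>x. f x + g x) = (\<lambda>x. T f x + T g x)) \<and> (\<forall>c f. T (\<lambda>x. c * f x) = (\<lambda>x. c * T f x))"

lemma lin_ops: "lin (opP v)" "lin (opS l)" "lin (opSs l)"
  by (auto simp: lin_def opP_def opS_def opSs_def fun_eq_iff)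

lemma lin_zero: "lin (\<lambda>f x. 0)" by (simp add: lin_def)

lemma ip_rng': "ip x \<Longrightarrow> l \<in> PP \<Longrightarrow> x (deg G l) = l \<Longrightarrow> x (\<lambda>i. 0) = rng G l"
  using ip_rng[of x "deg G l"] deg_Nk[of l] by simp

lemma lin_ev: "lin (ev a)"
proof (induction a)
  case (Gen g) then show ?case
    by (cases g) (simp_all add: lin_ops lin_zero)
next
  case Zero then show ?case by (simp add: lin_def)
next
  case (Add a b) then show ?case by (simp add: lin_def fun_eq_iff algebra_simps)
next
  case (Neg a) then show ?case by (simp add: lin_def fun_eq_iff algebra_simps)
next
  case (Mul a b) then show ?case unfolding lin_def by simp
next
  case (Smul c a) then show ?case by (simp add: lin_def fun_eq_iff algebra_simps)
qed

lemma ev_add: "ev a (\<lambda>x. f x + g x) = (\<lambda>x. ev a f x + ev a g x)"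
  and ev_smul: "ev a (\<lambda>x. c * f x) = (\<lambda>x. c * ev a f x)"
  using lin_ev[of a] unfolding lin_def by blast+

lemma ev_tP: "v \<in> vertices G \<Longrightarrow> ev (tP v) = opP v"
  by (simp add: tP_def valid_gen_def)

lemma ev_tS: assumes l: "l \<in> PP" shows "ev (tS G l) = opS l"
proof (cases "deg G l = (\<lambda>i. 0)")
  case True
  then have v: "l \<in> vertices G" using l by (simp add: vertices_iff)
  have "opP l = (opS l :: _ \<Rightarrow> _ \<Rightarrow> 'a)"
    by (auto simp: fun_eq_iff opP_def opS_def True shift_zero)
  then show ?thesis using True v by (simp add: tS_def valid_gen_def)
next
  case False then show ?thesis using l by (simp add: tS_def valid_gen_def)
qed

lemma ev_tSs: assumes l: "l \<in> PP" shows "ev (tSs G l) = opSs l"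
proof (cases "deg G l = (\<lambda>i. 0)")
  case True
  then have v: "l \<in> vertices G" using l by (simp add: vertices_iff)
  have sl: "src G l = l" using deg0_vertex[OF l True] by simp
  have "opP l = (opSs l :: _ \<Rightarrow> _ \<Rightarrow> 'a)"
    by (auto simp: fun_eq_iff opP_def opSs_def sl cat_vertex)
  then show ?thesis using True v by (simp add: tSs_def valid_gen_def)
next
  case False then show ?thesis using l by (simp add: tSs_def valid_gen_def)
qed

lemma ev_tsum: "ev (tsum xs) f x = sum_list (map (\<lambda>t. ev t f x) xs)"
  by (induction xs) (simp_all add: tsum_def)


lemma opS_comp: assumes l: "l \<in> PP" and m: "m \<in> PP" and s: "src G l = rng G m"
  shows "opS l (opS m f) = opS (cmp G l m) f"
proof
  fix x show "opS l (opS m f) x = opS (cmp G l m) f x"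
  proof (cases "ip x")
    case True
    have ip2: "ip (shift (deg G l) x)" using ip_shift[OF True deg_Nk[OF l]] .
    show ?thesis using True ip2 ip_cmp_iff[OF True l m s]
        shift_shift[OF True deg_Nk[OF l] deg_Nk[OF m]] deg_cmp[OF l m s]
      by (auto simp: opS_def)
  qed (simp add: opS_def)
qed

lemma opSs_comp: assumes l: "l \<in> PP" and m: "m \<in> PP" and s: "src G l = rng G m"
  shows "opSs m (opSs l f) = opSs (cmp G l m) f"
proof
  fix x show "opSs m (opSs l f) x = opSs (cmp G l m) f x"
  proof (cases "ip x \<and> x (\<lambda>i. 0) = src G m")
    case True
    have ip2: "ip (cat m x)" using ip_cat[of x m] True m by simp
    show ?thesis using True ip2 cat_at0[of x m] cat_cat[of x l m] l m s src_cmp[of l m]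
      by (auto simp: opSs_def)
  next
    case False then show ?thesis using l m s src_cmp[of l m] by (auto simp: opSs_def)
  qed
qed

lemma op_KP4: assumes v: "v \<in> vertices G" and n: "in_Nk k n" and d: "distinct ls" and sl: "set ls = vLn G v n"
  shows "sum_list (map (\<lambda>l. opS l (opSs l f) x) ls) = opP v f x"
proof -
  have ls: "\<And>l. l \<in> set ls \<Longrightarrow> l \<in> PP \<and> rng G l = v \<and> deg G l = n" using sl by (auto simp: vLn_def)
  have t: "opS l (opSs l f) x = (if ip x \<and> x n = l then f x else 0)" if l: "l \<in> set ls" for l
  proof -
    note L = ls[OF l]
    show ?thesis
    proof (cases "ip x \<and> x n = l")
      case True
      have "ip (shift n x)" "shift n x (\<lambda>i. 0) = src G l" "cat l (shift n x) = x"
        using True ip_shift shift_at0 cat_shift n by auto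
      then show ?thesis using True L by (simp add: opS_def opSs_def)
    next
      case False then show ?thesis using L by (auto simp: opS_def)
    qed
  qed
  have "sum_list (map (\<lambda>l. opS l (opSs l f) x) ls)
      = sum_list (map (\<lambda>l. if ip x \<and> x n = l then f x else 0) ls)"
    using t by (intro arg_cong[where f=sum_list] map_cong) auto
  also have "\<dots> = (\<Sum>l\<in>set ls. if ip x \<and> x n = l then f x else 0)"
    using d by (simp add: sum_list_distinct_conv_sum_set)
  also have "\<dots> = (if ip x \<and> x n \<in> set ls then f x else 0)"
    by (cases "ip x") (simp_all add: sum.delta)
  also have "\<dots> = opP v f x"
  proof (cases "ip x")
    case True
    then have "x n \<in> set ls \<longleftrightarrow> x (\<lambda>i. 0) = v"
      using n sl ipD[OF True] ip_rng[OF True] by (auto simp: vLn_def)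
    then show ?thesis using True by (simp add: opP_def)
  qed (simp add: opP_def)
  finally show ?thesis .
qed

lemma ev_KP4: assumes v: "v \<in> vertices G" and n: "in_Nk k n" and nz: "n \<noteq> (\<lambda>i. 0)"
  and d: "distinct ls" and sl: "set ls = vLn G v n"
  shows "ev (tP v) = ev (tsum (map (\<lambda>l. Mul (tS G l) (tSs G l)) ls))"
proof (rule ext, rule ext)
  fix f x
  have P: "\<And>l. l \<in> set ls \<Longrightarrow> l \<in> PP" using sl by (auto simp: vLn_def)
  have "ev (tsum (map (\<lambda>l. Mul (tS G l) (tSs G l)) ls)) f x = sum_list (map (\<lambda>l. opS l (opSs l f) x) ls)"
    unfolding ev_tsum map_map comp_def
    by (intro arg_cong[where f=sum_list] map_cong) (auto simp: ev_tS ev_tSs P)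
  then show "ev (tP v) f x = ev (tsum (map (\<lambda>l. Mul (tS G l) (tSs G l)) ls)) f x"
    using op_KP4[OF v n d sl, of f x] v by (simp add: ev_tP)
qed

lemma ev_sound: "kp_eq k G a b \<Longrightarrow> ev a = ev b"
proof (induction rule: kp_eq.induct)
  case (distl a b c) then show ?case by (simp add: fun_eq_iff ev_add)
next
  case (smul_mul_right r a b) then show ?case by (simp add: fun_eq_iff ev_smul)
next
  case (add_assoc a b c) then show ?case by (simp add: fun_eq_iff algebra_simps)
next
  case (add_comm a b) then show ?case by (simp add: fun_eq_iff algebra_simps)
next
  case (smul_radd r r' a) then show ?case by (simp add: fun_eq_iff algebra_simps)
next
  case (smul_add r a b) then show ?case by (simp add: fun_eq_iff algebra_simps)
next
  case (smul_mult r r' a) then show ?case by (simp add: fun_eq_iff algebra_simps)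
next
  case (invalid g) then show ?case by simp
next
  case (KP1a v) then show ?case by (simp add: ev_tP fun_eq_iff opP_def)
next
  case (KP1b v w) then show ?case by (simp add: ev_tP fun_eq_iff opP_def)
next
  case (KP2a l m)
  then show ?case by (simp add: ev_tS cmp_P opS_comp fun_eq_iff)
next
  case (KP2b l m)
  then show ?case by (simp add: ev_tSs cmp_P opSs_comp fun_eq_iff)
next
  case (KP2c l)
  show ?case using KP2c
    by (auto simp: ev_tS ev_tP rng_vertex fun_eq_iff opP_def opS_def ip_rng')
next
  case (KP2d l)
  show ?case using KP2d
    by (auto simp: ev_tS ev_tP src_vertex fun_eq_iff opP_def opS_def ip_shift shift_at0 deg_Nk)
next
  case (KP2e l)
  show ?case using KP2e
    by (auto simp: ev_tSs ev_tP src_vertex fun_eq_iff opP_def opSs_def)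
next
  case (KP2f l)
  show ?case using KP2f
    by (auto simp: ev_tSs ev_tP rng_vertex fun_eq_iff opP_def opSs_def ip_cat cat_at0)
next
  case (KP3 l m)
  show ?case
  proof (cases "l = m")
    case True
    then show ?thesis using KP3
      by (auto simp: ev_tSs ev_tS ev_tP src_vertex fun_eq_iff opP_def opSs_def opS_def ip_cat cat_deg shift_cat)
  next
    case False
    have e: "deg G m = deg G l" using KP3(3) by simp
    show ?thesis using KP3(1,2) False
      by (auto simp: ev_tSs ev_tS fun_eq_iff opSs_def opS_def ip_cat cat_deg e)
  qed
next
  case (KP4 v n ls)
  then show ?case by (rule ev_KP4)
next
  case (cong_mul a a' b b')
  then show ?case by simp
qed (simp_all add: fun_eq_iff)

end


context kg begin

definition ee :: "nat \<Rightarrow> nat" where "ee = (\<lambda>i. if i < k then 1 else 0)"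

lemma ee_Nk: "in_Nk k ee" by (simp add: ee_def in_Nk_def)

primrec sq :: "'p \<Rightarrow> nat \<Rightarrow> 'p" where
  "sq w 0 = w"
| "sq w (Suc j) = cmp G (sq w j) (SOME g. g \<in> vLn G (src G (sq w j)) ee)"

lemma sq_props: assumes rf: "row_finite_no_sources k G" and w: "w \<in> vertices G"
  shows "sq w j \<in> PP \<and> deg G (sq w j) = (\<lambda>i. j * ee i) \<and> rng G (sq w j) = w"
proof (induction j)
  case 0 then show ?case using w vertices_iff[of w] by (auto simp: vertices_def)
next
  case (Suc j)
  let ?g = "SOME g. g \<in> vLn G (src G (sq w j)) ee"
  have "vLn G (src G (sq w j)) ee \<noteq> {}" using rf Suc src_vertex ee_Nk
    unfolding row_finite_no_sources_def by blast
  then have "?g \<in> vLn G (src G (sq w j)) ee" by (meson ex_in_conv someI_ex)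
  then have g: "?g \<in> PP" "rng G ?g = src G (sq w j)" "deg G ?g = ee" by (auto simp: vLn_def)
  show ?case using Suc g cmp_P[of "sq w j" ?g] deg_cmp[of "sq w j" ?g] rng_cmp[of "sq w j" ?g]
    by (auto simp: madd_def)
qed

lemma sq_ext: assumes rf: "row_finite_no_sources k G" and w: "w \<in> vertices G" and jj: "j \<le> j'"
  shows "\<exists>c\<in>PP. src G (sq w j) = rng G c \<and> sq w j' = cmp G (sq w j) c"
  using jj
proof (induction j' rule: dec_induct)
  case base
  then show ?case using sq_props[OF rf w, of j] by (intro bexI[of _ "src G (sq w j)"]) (auto simp: P_src)
next
  case (step j')
  then obtain c where c: "c \<in> PP" "src G (sq w j) = rng G c" "sq w j' = cmp G (sq w j) c" by blast
  let ?g = "SOME g. g \<in> vLn G (src G (sq w j')) ee"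
  have "vLn G (src G (sq w j')) ee \<noteq> {}" using rf sq_props[OF rf w] src_vertex ee_Nk
    unfolding row_finite_no_sources_def by blast
  then have "?g \<in> vLn G (src G (sq w j')) ee" by (meson ex_in_conv someI_ex)
  then have g: "?g \<in> PP" "rng G ?g = src G (sq w j')" by (auto simp: vLn_def)
  have sj: "sq w j \<in> PP" using sq_props[OF rf w] by blast
  have scg: "src G c = rng G ?g" using g(2) c src_cmp[OF sj c(1) c(2)] by simp
  have "sq w (Suc j') = cmp G (sq w j) (cmp G c ?g)"
    using cmp_assoc[OF sj c(1) g(1) c(2) scg] c(3) by simp
  moreover have "cmp G c ?g \<in> PP" using cmp_P[OF c(1) g(1) scg] .
  moreover have "src G (sq w j) = rng G (cmp G c ?g)" using rng_cmp[OF c(1) g(1) scg] c(2) by simp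
  ultimately show ?case by blast
qed

lemma sq_pre: assumes rf: "row_finite_no_sources k G" and w: "w \<in> vertices G" and jj: "j \<le> j'"
  and n: "mle n (deg G (sq w j))"
  shows "pre (sq w j') n = pre (sq w j) n"
proof -
  obtain c where c: "c \<in> PP" "src G (sq w j) = rng G c" "sq w j' = cmp G (sq w j) c"
    using sq_ext[OF rf w jj] by blast
  show ?thesis using pre_cmp(1)[OF _ c(1) c(2) n] sq_props[OF rf w] c(3) by simp
qed

definition JJ :: "(nat \<Rightarrow> nat) \<Rightarrow> nat" where "JJ n = sum n {..<k}"

lemma mle_JJ: "in_Nk k n \<Longrightarrow> mle n (\<lambda>i. JJ n * ee i)"
  unfolding mle_def JJ_def ee_def in_Nk_def
  by (auto intro: member_le_sum)

lemma JJ_mono: "mle n m \<Longrightarrow> JJ n \<le> JJ m"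
  unfolding JJ_def mle_def by (intro sum_mono) auto

lemma ip_exists: assumes rf: "row_finite_no_sources k G" and w: "w \<in> vertices G"
  shows "\<exists>x. ip x \<and> x (\<lambda>i. 0) = w"
proof -
  define x where "x = (\<lambda>n. if in_Nk k n then pre (sq w (JJ n)) n else undefined)"
  have ip: "ip x" unfolding ip_def
  proof (intro conjI allI impI)
    fix n assume n: "in_Nk k n"
    have "mle n (deg G (sq w (JJ n)))" using sq_props[OF rf w] mle_JJ[OF n] by simp
    then show "x n \<in> PP" "deg G (x n) = n" using n sq_props[OF rf w] P_pre deg_pre by (auto simp: x_def)
  next
    fix n assume "\<not> in_Nk k n" then show "x n = undefined" by (simp add: x_def)
  next
    fix n m assume m: "in_Nk k m" and nm: "mle n m"
    have n: "in_Nk k n" using in_Nk_mle[OF nm m] .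
    have dm: "mle m (deg G (sq w (JJ m)))" using sq_props[OF rf w] mle_JJ[OF m] by simp
    have dn: "mle n (deg G (sq w (JJ n)))" using sq_props[OF rf w] mle_JJ[OF n] by simp
    have "pre (pre (sq w (JJ m)) m) n = pre (sq w (JJ m)) n"
      using pre_pre[OF _ nm dm] sq_props[OF rf w] by simp
    also have "\<dots> = pre (sq w (JJ n)) n" using sq_pre[OF rf w JJ_mono[OF nm] dn] .
    finally show "pre (x m) n = x n" using m n by (simp add: x_def)
  qed
  have "x (\<lambda>i. 0) = w" using w pre_0[of w] by (simp add: x_def JJ_def vertices_def)
  with ip show ?thesis by blast
qed

lemma rpw_nonzero: assumes rf: "row_finite_no_sources k G" and w: "w \<in> vertices G"
  and r: "(r :: 'r::comm_ring_1) \<noteq> 0"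
  shows "\<not> kp_eq k G (Smul r (tP w)) Zero"
proof
  assume "kp_eq k G (Smul r (tP w)) Zero"
  then have e: "ev (Smul r (tP w)) = ev (Zero :: ('p, 'r) kpt)" by (rule ev_sound)
  obtain x where x: "ip x" "x (\<lambda>i. 0) = w" using ip_exists[OF rf w] by blast
  have "r = ev (Smul r (tP w)) (\<lambda>_. 1) x" using x w by (simp add: ev_tP opP_def)
  also have "\<dots> = ev (Zero :: ('p, 'r) kpt) (\<lambda>_. 1) x" by (simp only: e)
  also have "\<dots> = 0" by simp
  finally show False using r by simp
qed

end


context kg begin

abbreviation keq :: "('p, 'r::comm_ring_1) kpt \<Rightarrow> ('p, 'r) kpt \<Rightarrow> bool" (infix "\<approx>" 50)
  where "a \<approx> b \<equiv> kp_eq k G a b"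

lemmas ktrans[trans] = kp_eq.trans
lemmas krefl = kp_eq.refl
lemmas ksym = kp_eq.sym

lemma mulL: "a \<approx> b \<Longrightarrow> Mul c a \<approx> Mul c b" by (rule kp_eq.cong_mul[OF krefl])
lemma mulR: "a \<approx> b \<Longrightarrow> Mul a c \<approx> Mul b c" by (rule kp_eq.cong_mul[OF _ krefl])
lemma smulC: "a \<approx> b \<Longrightarrow> Smul r a \<approx> Smul r b" by (rule kp_eq.cong_smul)
lemma addL: "a \<approx> b \<Longrightarrow> Add c a \<approx> Add c b" by (rule kp_eq.cong_add[OF krefl])
lemma addR: "a \<approx> b \<Longrightarrow> Add a c \<approx> Add b c" by (rule kp_eq.cong_add[OF _ krefl])
lemma assoc: "Mul (Mul a b) c \<approx> Mul a (Mul b c)" by (rule kp_eq.mul_assoc)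
lemma assoc': "Mul a (Mul b c) \<approx> Mul (Mul a b) c" by (rule ksym[OF kp_eq.mul_assoc])
lemma smulMl: "Mul (Smul r a) b \<approx> Smul r (Mul a b)" by (rule ksym[OF kp_eq.smul_mul_left])
lemma smulMr: "Mul a (Smul r b) \<approx> Smul r (Mul a b)" by (rule ksym[OF kp_eq.smul_mul_right])

lemma dbl_zero: assumes "X \<approx> Add X X" shows "X \<approx> Zero"
proof -
  have "Zero \<approx> Add X (Neg X)" by (rule ksym[OF kp_eq.add_neg])
  also have "\<dots> \<approx> Add (Add X X) (Neg X)" by (rule addR[OF assms])
  also have "\<dots> \<approx> Add X (Add X (Neg X))" by (rule kp_eq.add_assoc)
  also have "\<dots> \<approx> Add X Zero" by (rule addL[OF kp_eq.add_neg])
  also have "\<dots> \<approx> X" by (rule kp_eq.add_zero)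
  finally show ?thesis by (rule ksym)
qed

lemma mul_zero_r: "Mul a Zero \<approx> Zero"
proof (rule dbl_zero)
  have "Mul a Zero \<approx> Mul a (Add Zero Zero)" by (rule mulL[OF ksym[OF kp_eq.add_zero]])
  also have "\<dots> \<approx> Add (Mul a Zero) (Mul a Zero)" by (rule kp_eq.distl)
  finally show "Mul a Zero \<approx> Add (Mul a Zero) (Mul a Zero)" .
qed

lemma mul_zero_l: "Mul Zero a \<approx> Zero"
proof (rule dbl_zero)
  have "Mul Zero a \<approx> Mul (Add Zero Zero) a" by (rule mulR[OF ksym[OF kp_eq.add_zero]])
  also have "\<dots> \<approx> Add (Mul Zero a) (Mul Zero a)" by (rule kp_eq.distr)
  finally show "Mul Zero a \<approx> Add (Mul Zero a) (Mul Zero a)" .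
qed

lemma smul_zero: "Smul r Zero \<approx> Zero"
proof (rule dbl_zero)
  have "Smul r Zero \<approx> Smul r (Add Zero Zero)" by (rule smulC[OF ksym[OF kp_eq.add_zero]])
  also have "\<dots> \<approx> Add (Smul r Zero) (Smul r Zero)" by (rule kp_eq.smul_add)
  finally show "Smul r Zero \<approx> Add (Smul r Zero) (Smul r Zero)" .
qed

lemma zL: "X \<approx> Zero \<Longrightarrow> Mul Y X \<approx> Zero" using mulL mul_zero_r ktrans by blast
lemma zR: "X \<approx> Zero \<Longrightarrow> Mul X Y \<approx> Zero" using mulR mul_zero_l ktrans by blast
lemma zS: "X \<approx> Zero \<Longrightarrow> Smul r X \<approx> Zero" using smulC smul_zero ktrans by blast

lemma KP3same: "l \<in> PP \<Longrightarrow> Mul (tSs G l) (tS G l) \<approx> tP (src G l)"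
  using kp_eq.KP3[of l G l k] by simp
lemma KP3diff: "l \<in> PP \<Longrightarrow> m \<in> PP \<Longrightarrow> deg G l = deg G m \<Longrightarrow> l \<noteq> m \<Longrightarrow> Mul (tSs G l) (tS G m) \<approx> Zero"
  using kp_eq.KP3[of l G m k] by simp

lemma kill_S: assumes l: "l \<in> PP" and h: "Smul r (tS G l) \<approx> Zero" shows "Smul r (tP (src G l)) \<approx> Zero"
proof -
  have "Smul r (tP (src G l)) \<approx> Smul r (Mul (tSs G l) (tS G l))" by (rule smulC[OF ksym[OF KP3same[OF l]]])
  also have "\<dots> \<approx> Mul (tSs G l) (Smul r (tS G l))" by (rule kp_eq.smul_mul_right)
  also have "\<dots> \<approx> Zero" by (rule zL[OF h])
  finally show ?thesis .
qed

lemma kill_Ss: assumes l: "l \<in> PP" and h: "Smul r (tSs G l) \<approx> Zero" shows "Smul r (tP (src G l)) \<approx> Zero"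
proof -
  have "Smul r (tP (src G l)) \<approx> Smul r (Mul (tSs G l) (tS G l))" by (rule smulC[OF ksym[OF KP3same[OF l]]])
  also have "\<dots> \<approx> Mul (Smul r (tSs G l)) (tS G l)" by (rule kp_eq.smul_mul_left)
  also have "\<dots> \<approx> Zero" by (rule zR[OF h])
  finally show ?thesis .
qed

lemma tsum_cons: "tsum (x # xs) = Add x (tsum xs)" by (simp add: tsum_def)
lemma tsum_nil: "tsum [] = Zero" by (simp add: tsum_def)

lemma tsum_cong: "(\<And>x. x \<in> set L \<Longrightarrow> f x \<approx> g x) \<Longrightarrow> tsum (map f L) \<approx> tsum (map g L)"
  by (induction L) (auto simp: tsum_cons tsum_nil intro: krefl kp_eq.cong_add)

lemma tsum_mulL: "Mul c (tsum (map f L)) \<approx> tsum (map (\<lambda>x. Mul c (f x)) L)"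
proof (induction L)
  case Nil then show ?case by (simp add: tsum_nil mul_zero_r)
next
  case (Cons a L)
  have "Mul c (tsum (map f (a # L))) \<approx> Add (Mul c (f a)) (Mul c (tsum (map f L)))"
    by (simp add: tsum_cons kp_eq.distl)
  also have "\<dots> \<approx> Add (Mul c (f a)) (tsum (map (\<lambda>x. Mul c (f x)) L))" by (rule addL[OF Cons])
  finally show ?case by (simp add: tsum_cons)
qed

lemma tsum_mulR: "Mul (tsum (map f L)) c \<approx> tsum (map (\<lambda>x. Mul (f x) c) L)"
proof (induction L)
  case Nil then show ?case by (simp add: tsum_nil mul_zero_l)
next
  case (Cons a L)
  have "Mul (tsum (map f (a # L))) c \<approx> Add (Mul (f a) c) (Mul (tsum (map f L)) c)"
    by (simp add: tsum_cons kp_eq.distr)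
  also have "\<dots> \<approx> Add (Mul (f a) c) (tsum (map (\<lambda>x. Mul (f x) c) L))" by (rule addL[OF Cons])
  finally show ?case by (simp add: tsum_cons)
qed

lemma tsum_move: "a \<in> set ys \<Longrightarrow> tsum (map h ys) \<approx> Add (h a) (tsum (map h (remove1 a ys)))"
proof (induction ys)
  case Nil then show ?case by simp
next
  case (Cons b ys)
  show ?case
  proof (cases "a = b")
    case True then show ?thesis by (simp add: tsum_cons krefl)
  next
    case False
    then have a: "a \<in> set ys" using Cons by simp
    have "tsum (map h (b # ys)) \<approx> Add (h b) (Add (h a) (tsum (map h (remove1 a ys))))"
      unfolding list.map tsum_cons by (rule addL[OF Cons.IH[OF a]])
    also have "\<dots> \<approx> Add (Add (h b) (h a)) (tsum (map h (remove1 a ys)))" by (rule ksym[OF kp_eq.add_assoc])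
    also have "\<dots> \<approx> Add (Add (h a) (h b)) (tsum (map h (remove1 a ys)))" by (rule addR[OF kp_eq.add_comm])
    also have "\<dots> \<approx> Add (h a) (Add (h b) (tsum (map h (remove1 a ys))))" by (rule kp_eq.add_assoc)
    finally show ?thesis using False by (simp add: tsum_cons)
  qed
qed

lemma tsum_perm: "distinct xs \<Longrightarrow> distinct ys \<Longrightarrow> set xs = set ys \<Longrightarrow> tsum (map h xs) \<approx> tsum (map h ys)"
proof (induction xs arbitrary: ys)
  case Nil then show ?case by (simp add: krefl)
next
  case (Cons a xs)
  have a: "a \<in> set ys" using Cons by auto
  have "set xs = set (remove1 a ys)" using Cons by auto
  then have ih: "tsum (map h xs) \<approx> tsum (map h (remove1 a ys))"
    using Cons by (intro Cons.IH) auto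
  have "tsum (map h (a # xs)) \<approx> Add (h a) (tsum (map h (remove1 a ys)))"
    unfolding list.map tsum_cons by (rule addL[OF ih])
  also have "\<dots> \<approx> tsum (map h ys)" by (rule ksym[OF tsum_move[OF a]])
  finally show ?case .
qed

end


context kg begin

lemma tS_vertex: "v \<in> vertices G \<Longrightarrow> tS G v = tP v" "v \<in> vertices G \<Longrightarrow> tSs G v = tP v"
  by (auto simp: tS_def tSs_def tP_def vertices_iff)

lemma expand:
  assumes rf: "row_finite_no_sources k G" and mu: "\<mu> \<in> PP" and n: "in_Nk k n"
  obtains L where "distinct L" "set L = vLn G (src G \<mu>) n"
    "Mul (tS G \<mu>) (tSs G \<mu>) \<approx> (tsum (map (\<lambda>a. Mul (tS G (cmp G \<mu> a)) (tSs G (cmp G \<mu> a))) L) :: ('p, 'r::comm_ring_1) kpt)"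
proof -
  let ?v = "src G \<mu>"
  have v: "?v \<in> vertices G" using src_vertex[OF mu] .
  have "\<exists>L. distinct L \<and> set L = vLn G ?v n \<and> (tP ?v :: ('p, 'r) kpt) \<approx> tsum (map (\<lambda>a. Mul (tS G a) (tSs G a)) L)"
  proof (cases "n = (\<lambda>i. 0)")
    case True
    have "vLn G ?v n = {?v}"
    proof
      show "vLn G ?v n \<subseteq> {?v}"
        using deg0_vertex True by (auto simp: vLn_def)
      show "{?v} \<subseteq> vLn G ?v n" using v True mu by (auto simp: vLn_def vertices_def)
    qed
    moreover have "(tP ?v :: ('p, 'r) kpt) \<approx> tsum (map (\<lambda>a. Mul (tS G a) (tSs G a)) [?v])"
    proof -
      have "(tP ?v :: ('p, 'r) kpt) \<approx> Mul (tP ?v) (tP ?v)" by (rule ksym[OF kp_eq.KP1a[OF v]])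
      also have "\<dots> \<approx> Add (Mul (tP ?v) (tP ?v)) Zero" by (rule ksym[OF kp_eq.add_zero])
      finally show ?thesis by (simp add: tsum_cons tsum_nil tS_vertex[OF v])
    qed
    ultimately show ?thesis by (intro exI[of _ "[?v]"]) auto
  next
    case False
    have "finite (vLn G ?v n)" using rf v n unfolding row_finite_no_sources_def by blast
    then obtain L where L: "distinct L" "set L = vLn G ?v n" using finite_distinct_list by blast
    then show ?thesis using kp_eq.KP4[OF v n False L] by blast
  qed
  then obtain L where L: "distinct L" "set L = vLn G ?v n"
    and base: "(tP ?v :: ('p, 'r) kpt) \<approx> tsum (map (\<lambda>a. Mul (tS G a) (tSs G a)) L)" by blast
  have pt: "Mul (tS G \<mu>) (Mul (Mul (tS G a) (tSs G a)) (tSs G \<mu>)) \<approx>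
      (Mul (tS G (cmp G \<mu> a)) (tSs G (cmp G \<mu> a)) :: ('p, 'r) kpt)" if a: "a \<in> set L" for a
  proof -
    have aP: "a \<in> PP" and ra: "rng G a = src G \<mu>" using a L by (auto simp: vLn_def)
    have "Mul (tS G \<mu>) (Mul (Mul (tS G a) (tSs G a)) (tSs G \<mu>)) \<approx>
        (Mul (tS G \<mu>) (Mul (tS G a) (Mul (tSs G a) (tSs G \<mu>))) :: ('p, 'r) kpt)" by (rule mulL[OF assoc])
    also have "\<dots> \<approx> Mul (Mul (tS G \<mu>) (tS G a)) (Mul (tSs G a) (tSs G \<mu>))" by (rule assoc')
    also have "\<dots> \<approx> Mul (tS G (cmp G \<mu> a)) (Mul (tSs G a) (tSs G \<mu>))" by (rule mulR[OF kp_eq.KP2a[OF mu aP ra]])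
    also have "\<dots> \<approx> Mul (tS G (cmp G \<mu> a)) (tSs G (cmp G \<mu> a))" by (rule mulL[OF kp_eq.KP2b[OF mu aP ra]])
    finally show ?thesis .
  qed
  have "Mul (tS G \<mu>) (tSs G \<mu>) \<approx> (Mul (Mul (tS G \<mu>) (tP ?v)) (tSs G \<mu>) :: ('p, 'r) kpt)"
    by (rule mulR[OF ksym[OF kp_eq.KP2d[OF mu]]])
  also have "\<dots> \<approx> Mul (tS G \<mu>) (Mul (tP ?v) (tSs G \<mu>))" by (rule assoc)
  also have "\<dots> \<approx> Mul (tS G \<mu>) (Mul (tsum (map (\<lambda>a. Mul (tS G a) (tSs G a)) L)) (tSs G \<mu>))"
    by (rule mulL[OF mulR[OF base]])
  also have "\<dots> \<approx> Mul (tS G \<mu>) (tsum (map (\<lambda>a. Mul (Mul (tS G a) (tSs G a)) (tSs G \<mu>)) L))"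
    by (rule mulL[OF tsum_mulR])
  also have "\<dots> \<approx> tsum (map (\<lambda>a. Mul (tS G \<mu>) (Mul (Mul (tS G a) (tSs G a)) (tSs G \<mu>))) L)"
    by (rule tsum_mulL)
  also have "\<dots> \<approx> tsum (map (\<lambda>a. Mul (tS G (cmp G \<mu> a)) (tSs G (cmp G \<mu> a))) L)"
    by (rule tsum_cong[OF pt])
  finally show ?thesis using that L by blast
qed

end


context kg begin

lemma dirA:
  fixes r :: "'r::comm_ring_1"
  assumes rf: "row_finite_no_sources k G" and mu: "\<mu> \<in> PP" and nu: "\<nu> \<in> PP"
    and s: "src G \<mu> = src G \<nu>" and r: "r \<noteq> 0"
    and hyp: "kp_in_D' k G (Smul r (Mul (tS G \<mu>) (tSs G \<nu>)))"
    and a: "a \<in> vLn G (src G \<mu>) nm" and m: "madd (deg G \<mu>) nm = madd (deg G \<nu>) nn"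
  shows "cmp G \<mu> a \<in> cmp G \<nu> ` vLn G (src G \<nu>) nn"
proof (rule ccontr)
  assume nl: "cmp G \<mu> a \<notin> cmp G \<nu> ` vLn G (src G \<nu>) nn"
  let ?A = "Smul r (Mul (tS G \<mu>) (tSs G \<nu>))"
  let ?l = "cmp G \<mu> a"
  have aP: "a \<in> PP" and ra: "rng G a = src G \<mu>" and da: "deg G a = nm" using a by (auto simp: vLn_def)
  have lP: "?l \<in> PP" using cmp_P[OF mu aP ra[symmetric]] .
  have dl: "deg G ?l = madd (deg G \<nu>) nn" using deg_cmp[OF mu aP ra[symmetric]] da m by simp
  have le: "mle (deg G \<nu>) (deg G ?l)" using dl by simp
  note f = fac_props[OF lP le]
  let ?n' = "pre ?l (deg G \<nu>)" and ?g = "suf ?l (deg G \<nu>)"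
  have ne: "?n' \<noteq> \<nu>"
  proof
    assume e: "?n' = \<nu>"
    have g1: "?g \<in> vLn G (src G \<nu>) nn" using f e dl by (auto simp: vLn_def)
    have g2: "?l = cmp G \<nu> ?g" using f(6) e by simp
    have "?l \<in> cmp G \<nu> ` vLn G (src G \<nu>) nn" by (rule image_eqI[where f="cmp G _", OF g2 g1])
    with nl show False by (rule notE)
  qed
  have X1: "Mul (tSs G \<nu>) (tS G ?l) \<approx> (Zero :: ('p, 'r) kpt)"
  proof -
    have "Mul (tSs G \<nu>) (tS G ?l) \<approx> (Mul (tSs G \<nu>) (Mul (tS G ?n') (tS G ?g)) :: ('p, 'r) kpt)"
      using mulL[OF ksym[OF kp_eq.KP2a[OF f(1) f(2) f(3)[symmetric]]]] f(6) by simp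
    also have "\<dots> \<approx> Mul (Mul (tSs G \<nu>) (tS G ?n')) (tS G ?g)" by (rule assoc')
    also have "\<dots> \<approx> Zero" by (rule zR[OF KP3diff[OF nu f(1)]]) (use f(4) ne in auto)
    finally show ?thesis .
  qed
  have dD: "Mul (tS G ?l) (tSs G ?l) \<in> (kp_D k G :: ('p, 'r) kpt set)" by (rule kp_D.gen[OF lP])
  have H: "Mul ?A (Mul (tS G ?l) (tSs G ?l)) \<approx> Mul (Mul (tS G ?l) (tSs G ?l)) ?A"
    using hyp dD unfolding kp_in_D'_def by (rule bspec)
  have AdZ: "Mul ?A (Mul (tS G ?l) (tSs G ?l)) \<approx> Zero"
  proof -
    have "Mul ?A (Mul (tS G ?l) (tSs G ?l)) \<approx> Smul r (Mul (Mul (tS G \<mu>) (tSs G \<nu>)) (Mul (tS G ?l) (tSs G ?l)))"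
      by (rule smulMl)
    also have "\<dots> \<approx> Smul r (Mul (tS G \<mu>) (Mul (tSs G \<nu>) (Mul (tS G ?l) (tSs G ?l))))" by (rule smulC[OF assoc])
    also have "\<dots> \<approx> Smul r (Mul (tS G \<mu>) (Mul (Mul (tSs G \<nu>) (tS G ?l)) (tSs G ?l)))"
      by (rule smulC[OF mulL[OF assoc']])
    also have "\<dots> \<approx> Zero" by (rule zS[OF zL[OF zR[OF X1]]])
    finally show ?thesis .
  qed
  have dAZ: "Mul (Mul (tS G ?l) (tSs G ?l)) ?A \<approx> Zero" by (rule ktrans[OF ksym[OF H] AdZ])
  have E: "Mul (tSs G ?l) (Mul (tS G ?l) (tSs G ?l)) \<approx> (tSs G ?l :: ('p, 'r) kpt)"
  proof -
    have "Mul (tSs G ?l) (Mul (tS G ?l) (tSs G ?l)) \<approx> (Mul (Mul (tSs G ?l) (tS G ?l)) (tSs G ?l) :: ('p, 'r) kpt)"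
      by (rule assoc')
    also have "\<dots> \<approx> Mul (tP (src G ?l)) (tSs G ?l)" by (rule mulR[OF KP3same[OF lP]])
    also have "\<dots> \<approx> tSs G ?l" by (rule kp_eq.KP2e[OF lP])
    finally show ?thesis .
  qed
  have E2: "Mul (tSs G ?l) (tS G \<mu>) \<approx> (tSs G a :: ('p, 'r) kpt)"
  proof -
    have "Mul (tSs G ?l) (tS G \<mu>) \<approx> (Mul (Mul (tSs G a) (tSs G \<mu>)) (tS G \<mu>) :: ('p, 'r) kpt)"
      by (rule mulR[OF ksym[OF kp_eq.KP2b[OF mu aP ra]]])
    also have "\<dots> \<approx> Mul (tSs G a) (Mul (tSs G \<mu>) (tS G \<mu>))" by (rule assoc)
    also have "\<dots> \<approx> Mul (tSs G a) (tP (rng G a))" using mulL[OF KP3same[OF mu]] ra by simp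
    also have "\<dots> \<approx> tSs G a" by (rule kp_eq.KP2f[OF aP])
    finally show ?thesis .
  qed
  have ra2: "rng G a = src G \<nu>" using ra s by simp
  have naP: "cmp G \<nu> a \<in> PP" using cmp_P[OF nu aP ra2[symmetric]] .
  have "Smul r (tSs G (cmp G \<nu> a)) \<approx> Smul r (Mul (tSs G a) (tSs G \<nu>))"
    by (rule smulC[OF ksym[OF kp_eq.KP2b[OF nu aP ra2]]])
  also have "\<dots> \<approx> Smul r (Mul (Mul (tSs G ?l) (tS G \<mu>)) (tSs G \<nu>))" by (rule smulC[OF mulR[OF ksym[OF E2]]])
  also have "\<dots> \<approx> Smul r (Mul (tSs G ?l) (Mul (tS G \<mu>) (tSs G \<nu>)))" by (rule smulC[OF assoc])
  also have "\<dots> \<approx> Mul (tSs G ?l) ?A" by (rule ksym[OF smulMr])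
  also have "\<dots> \<approx> Mul (Mul (tSs G ?l) (Mul (tS G ?l) (tSs G ?l))) ?A" by (rule mulR[OF ksym[OF E]])
  also have "\<dots> \<approx> Mul (tSs G ?l) (Mul (Mul (tS G ?l) (tSs G ?l)) ?A)" by (rule assoc)
  also have "\<dots> \<approx> Zero" by (rule zL[OF dAZ])
  finally have "Smul r (tSs G (cmp G \<nu> a)) \<approx> Zero" .
  then have X: "Smul r (tP (src G (cmp G \<nu> a))) \<approx> Zero" by (rule kill_Ss[OF naP])
  show False using rpw_nonzero[OF rf src_vertex[OF naP] r] X by (rule notE)
qed

lemma dirB:
  fixes r :: "'r::comm_ring_1"
  assumes rf: "row_finite_no_sources k G" and mu: "\<mu> \<in> PP" and nu: "\<nu> \<in> PP"
    and s: "src G \<mu> = src G \<nu>" and r: "r \<noteq> 0"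
    and hyp: "kp_in_D' k G (Smul r (Mul (tS G \<mu>) (tSs G \<nu>)))"
    and b: "b \<in> vLn G (src G \<nu>) nn" and m: "madd (deg G \<mu>) nm = madd (deg G \<nu>) nn"
  shows "cmp G \<nu> b \<in> cmp G \<mu> ` vLn G (src G \<mu>) nm"
proof (rule ccontr)
  assume nl: "cmp G \<nu> b \<notin> cmp G \<mu> ` vLn G (src G \<mu>) nm"
  let ?A = "Smul r (Mul (tS G \<mu>) (tSs G \<nu>))"
  let ?l = "cmp G \<nu> b"
  have bP: "b \<in> PP" and rb: "rng G b = src G \<nu>" and db: "deg G b = nn" using b by (auto simp: vLn_def)
  have lP: "?l \<in> PP" using cmp_P[OF nu bP rb[symmetric]] .
  have dl: "deg G ?l = madd (deg G \<mu>) nm" using deg_cmp[OF nu bP rb[symmetric]] db m by simp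
  have le: "mle (deg G \<mu>) (deg G ?l)" using dl by simp
  note f = fac_props[OF lP le]
  let ?m' = "pre ?l (deg G \<mu>)" and ?g = "suf ?l (deg G \<mu>)"
  have ne: "?m' \<noteq> \<mu>"
  proof
    assume e: "?m' = \<mu>"
    have g1: "?g \<in> vLn G (src G \<mu>) nm" using f e dl by (auto simp: vLn_def)
    have g2: "?l = cmp G \<mu> ?g" using f(6) e by simp
    have "?l \<in> cmp G \<mu> ` vLn G (src G \<mu>) nm" by (rule image_eqI[where f="cmp G _", OF g2 g1])
    with nl show False by (rule notE)
  qed
  have X2: "Mul (tSs G ?l) (tS G \<mu>) \<approx> (Zero :: ('p, 'r) kpt)"
  proof -
    have "Mul (tSs G ?l) (tS G \<mu>) \<approx> (Mul (Mul (tSs G ?g) (tSs G ?m')) (tS G \<mu>) :: ('p, 'r) kpt)"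
      using mulR[OF ksym[OF kp_eq.KP2b[OF f(1) f(2) f(3)[symmetric]]]] f(6) by simp
    also have "\<dots> \<approx> Mul (tSs G ?g) (Mul (tSs G ?m') (tS G \<mu>))" by (rule assoc)
    also have "\<dots> \<approx> Zero" by (rule zL[OF KP3diff[OF f(1) mu]]) (use f(4) ne in auto)
    finally show ?thesis .
  qed
  have dD: "Mul (tS G ?l) (tSs G ?l) \<in> (kp_D k G :: ('p, 'r) kpt set)" by (rule kp_D.gen[OF lP])
  have H: "Mul ?A (Mul (tS G ?l) (tSs G ?l)) \<approx> Mul (Mul (tS G ?l) (tSs G ?l)) ?A"
    using hyp dD unfolding kp_in_D'_def by (rule bspec)
  have dAZ: "Mul (Mul (tS G ?l) (tSs G ?l)) ?A \<approx> Zero"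
  proof -
    have "Mul (Mul (tS G ?l) (tSs G ?l)) ?A \<approx> Smul r (Mul (Mul (tS G ?l) (tSs G ?l)) (Mul (tS G \<mu>) (tSs G \<nu>)))"
      by (rule smulMr)
    also have "\<dots> \<approx> Smul r (Mul (tS G ?l) (Mul (tSs G ?l) (Mul (tS G \<mu>) (tSs G \<nu>))))" by (rule smulC[OF assoc])
    also have "\<dots> \<approx> Smul r (Mul (tS G ?l) (Mul (Mul (tSs G ?l) (tS G \<mu>)) (tSs G \<nu>)))"
      by (rule smulC[OF mulL[OF assoc']])
    also have "\<dots> \<approx> Zero" by (rule zS[OF zL[OF zR[OF X2]]])
    finally show ?thesis .
  qed
  have AdZ: "Mul ?A (Mul (tS G ?l) (tSs G ?l)) \<approx> Zero" by (rule ktrans[OF H dAZ])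
  have E3: "Mul (Mul (tS G ?l) (tSs G ?l)) (tS G ?l) \<approx> (tS G ?l :: ('p, 'r) kpt)"
  proof -
    have "Mul (Mul (tS G ?l) (tSs G ?l)) (tS G ?l) \<approx> (Mul (tS G ?l) (Mul (tSs G ?l) (tS G ?l)) :: ('p, 'r) kpt)"
      by (rule assoc)
    also have "\<dots> \<approx> Mul (tS G ?l) (tP (src G ?l))" by (rule mulL[OF KP3same[OF lP]])
    also have "\<dots> \<approx> tS G ?l" by (rule kp_eq.KP2d[OF lP])
    finally show ?thesis .
  qed
  have E4: "Mul (tSs G \<nu>) (tS G ?l) \<approx> (tS G b :: ('p, 'r) kpt)"
  proof -
    have "Mul (tSs G \<nu>) (tS G ?l) \<approx> (Mul (tSs G \<nu>) (Mul (tS G \<nu>) (tS G b)) :: ('p, 'r) kpt)"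
      by (rule mulL[OF ksym[OF kp_eq.KP2a[OF nu bP rb]]])
    also have "\<dots> \<approx> Mul (Mul (tSs G \<nu>) (tS G \<nu>)) (tS G b)" by (rule assoc')
    also have "\<dots> \<approx> Mul (tP (rng G b)) (tS G b)" using mulR[OF KP3same[OF nu]] rb by simp
    also have "\<dots> \<approx> tS G b" by (rule kp_eq.KP2c[OF bP])
    finally show ?thesis .
  qed
  have rb2: "rng G b = src G \<mu>" using rb s by simp
  have mbP: "cmp G \<mu> b \<in> PP" using cmp_P[OF mu bP rb2[symmetric]] .
  have "Smul r (tS G (cmp G \<mu> b)) \<approx> Smul r (Mul (tS G \<mu>) (tS G b))"
    by (rule smulC[OF ksym[OF kp_eq.KP2a[OF mu bP rb2]]])
  also have "\<dots> \<approx> Smul r (Mul (tS G \<mu>) (Mul (tSs G \<nu>) (tS G ?l)))" by (rule smulC[OF mulL[OF ksym[OF E4]]])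
  also have "\<dots> \<approx> Smul r (Mul (Mul (tS G \<mu>) (tSs G \<nu>)) (tS G ?l))" by (rule smulC[OF assoc'])
  also have "\<dots> \<approx> Mul ?A (tS G ?l)" by (rule ksym[OF smulMl])
  also have "\<dots> \<approx> Mul ?A (Mul (Mul (tS G ?l) (tSs G ?l)) (tS G ?l))" by (rule mulL[OF ksym[OF E3]])
  also have "\<dots> \<approx> Mul (Mul ?A (Mul (tS G ?l) (tSs G ?l))) (tS G ?l)" by (rule assoc')
  also have "\<dots> \<approx> Zero" by (rule zR[OF AdZ])
  finally have "Smul r (tS G (cmp G \<mu> b)) \<approx> Zero" .
  then have X: "Smul r (tP (src G (cmp G \<mu> b))) \<approx> Zero" by (rule kill_S[OF mbP])
  show False using rpw_nonzero[OF rf src_vertex[OF mbP] r] X by (rule notE)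
qed

lemma main:
  fixes r :: "'r::comm_ring_1"
  assumes rf: "row_finite_no_sources k G" and mu: "\<mu> \<in> PP" and nu: "\<nu> \<in> PP"
    and s: "src G \<mu> = src G \<nu>" and r: "r \<noteq> 0"
    and hyp: "kp_in_D' k G (Smul r (Mul (tS G \<mu>) (tSs G \<nu>)))"
  shows "kp_eq k G (Mul (tS G \<mu>) (tSs G \<mu>)) (Mul (tS G \<nu>) (tSs G \<nu>) :: ('p, 's::comm_ring_1) kpt)"
proof -
  define mm where "mm = (\<lambda>i. max (deg G \<mu> i) (deg G \<nu> i))"
  define nm where "nm = msub mm (deg G \<mu>)"
  define nn where "nn = msub mm (deg G \<nu>)"
  have Nmm: "in_Nk k mm" using deg_Nk[OF mu, unfolded in_Nk_def] deg_Nk[OF nu, unfolded in_Nk_def]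
    unfolding mm_def in_Nk_def by simp
  have Nnm: "in_Nk k nm" "in_Nk k nn" unfolding nm_def nn_def using Nmm by (rule in_Nk_msub)+
  have eqm: "madd (deg G \<mu>) nm = madd (deg G \<nu>) nn"
  proof -
    have "deg G \<mu> i + (mm i - deg G \<mu> i) = mm i" "deg G \<nu> i + (mm i - deg G \<nu> i) = mm i" for i
      unfolding mm_def by simp_all
    then show ?thesis unfolding nm_def nn_def madd_def msub_def by simp
  qed
  obtain Lm where Lm: "distinct Lm" "set Lm = vLn G (src G \<mu>) nm"
    "Mul (tS G \<mu>) (tSs G \<mu>) \<approx> (tsum (map (\<lambda>a. Mul (tS G (cmp G \<mu> a)) (tSs G (cmp G \<mu> a))) Lm) :: ('p, 's) kpt)"
    by (rule expand[OF rf mu Nnm(1)])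
  obtain Ln where Ln: "distinct Ln" "set Ln = vLn G (src G \<nu>) nn"
    "Mul (tS G \<nu>) (tSs G \<nu>) \<approx> (tsum (map (\<lambda>a. Mul (tS G (cmp G \<nu> a)) (tSs G (cmp G \<nu> a))) Ln) :: ('p, 's) kpt)"
    by (rule expand[OF rf nu Nnm(2)])
  have SS: "cmp G \<mu> ` vLn G (src G \<mu>) nm = cmp G \<nu> ` vLn G (src G \<nu>) nn"
  proof (rule equalityI)
    show "cmp G \<mu> ` vLn G (src G \<mu>) nm \<subseteq> cmp G \<nu> ` vLn G (src G \<nu>) nn"
    proof (rule subsetI)
      fix x assume "x \<in> cmp G \<mu> ` vLn G (src G \<mu>) nm"
      then obtain a where a: "a \<in> vLn G (src G \<mu>) nm" and xa: "x = cmp G \<mu> a" by (rule imageE)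
      show "x \<in> cmp G \<nu> ` vLn G (src G \<nu>) nn" unfolding xa by (rule dirA[OF rf mu nu s r hyp a eqm])
    qed
    show "cmp G \<nu> ` vLn G (src G \<nu>) nn \<subseteq> cmp G \<mu> ` vLn G (src G \<mu>) nm"
    proof (rule subsetI)
      fix x assume "x \<in> cmp G \<nu> ` vLn G (src G \<nu>) nn"
      then obtain b where b: "b \<in> vLn G (src G \<nu>) nn" and xb: "x = cmp G \<nu> b" by (rule imageE)
      show "x \<in> cmp G \<mu> ` vLn G (src G \<mu>) nm" unfolding xb by (rule dirB[OF rf mu nu s r hyp b eqm])
    qed
  qed
  have inj: "inj_on (cmp G x) (vLn G (src G x) n)" if x: "x \<in> PP" for x n
  proof (rule inj_onI)
    fix a b assume a: "a \<in> vLn G (src G x) n" and b: "b \<in> vLn G (src G x) n" and e: "cmp G x a = cmp G x b"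
    have aP: "a \<in> PP" "src G x = rng G a" using a by (auto simp: vLn_def)
    have bP: "b \<in> PP" "src G x = rng G b" using b by (auto simp: vLn_def)
    have "a = suf (cmp G x a) (deg G x)" by (rule HOL.sym[OF fac_cmp(2)[OF x aP]])
    also have "\<dots> = suf (cmp G x b) (deg G x)" using e by simp
    also have "\<dots> = b" by (rule fac_cmp(2)[OF x bP])
    finally show "a = b" .
  qed
  have d1: "distinct (map (cmp G \<mu>) Lm)" using Lm inj[OF mu] by (simp add: distinct_map)
  have d2: "distinct (map (cmp G \<nu>) Ln)" using Ln inj[OF nu] by (simp add: distinct_map)
  let ?h = "\<lambda>x. Mul (tS G x) (tSs G x) :: ('p, 's) kpt"
  have "Mul (tS G \<mu>) (tSs G \<mu>) \<approx> tsum (map ?h (map (cmp G \<mu>) Lm))" using Lm(3) by (simp add: comp_def)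
  also have "\<dots> \<approx> tsum (map ?h (map (cmp G \<nu>) Ln))" by (rule tsum_perm[OF d1 d2]) (simp add: Lm Ln SS)
  also have "\<dots> \<approx> Mul (tS G \<nu>) (tSs G \<nu>)" using ksym[OF Ln(3)] by (simp add: comp_def)
  finally show ?thesis .
qed

end

theorem lemma4p8:
  fixes k :: nat and G :: "'p kgraph" and \<mu> \<nu> :: 'p and r :: "'r::comm_ring_1"
  assumes "is_kgraph k G"
    and "row_finite_no_sources k G"
    and "\<mu> \<in> paths G" and "\<nu> \<in> paths G"
    and "src G \<mu> = src G \<nu>"
    and "r \<noteq> 0"
    and "kp_in_D' k G (Smul r (Mul (tS G \<mu>) (tSs G \<nu>)))"
  shows "kp_eq k G (Mul (tS G \<mu>) (tSs G \<mu>)) (Mul (tS G \<nu>) (tSs G \<nu>))"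
proof -
  interpret kg k G by unfold_locales (rule assms(1))
  show ?thesis by (rule main[OF assms(2-7)])
qed


end
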